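(* Let $\pi,\pi'\in\mathcal{P}$ with $\mathrm{supp}\,\pi\cap\mathrm{supp}\,\pi'=\varnothing$. If $\mathrm{Ext}^1(\mathcal{V}(\pi),\mathcal{V}(\pi'))\neq0$, then $\pi=0$ or $\pi'=0$.
   Context: $\mathfrak{g}$ is a finite-dimensional complex semisimple Lie algebra; $P^+$ is the set of dominant integral weights and $V(\lambda)$ the simple $\mathfrak{g}$-module of highest weight $\lambda$. $A$ is a nonzero finitely generated commutative $\mathbb{C}$-algebra and $A\otimes\mathfrak{g}$ has bracket $[a\otimes x,b\otimes y]=ab\otimes[x,y]$. For a maximal ideal $\mathfrak{m}$, $V_{\mathfrak{m}}(\lambda)$ is $V(\lambda)$ with $a\otimes x$ acting by $a_{\mathfrak{m}}x$, $a_{\mathfrak{m}}$ being the image of $a$ in $A/\mathfrak{m}\simeq\mathbb{C}$. $\mathcal{P}$ is the set of finitely supported functions $\pi:\mathrm{Specm}\,A\to P^+$ with $\mathrm{supp}\,\pi=\{\mathfrak{m}:\pi(\mathfrak{m})\ne0\}$, and $\mathcal{V}(\pi)=\bigotimes_{\mathfrak{m}\in\mathrm{supp}\,\pi}V_{\mathfrak{m}}(\pi(\mathfrak{m}))$ (so $\mathcal{V}(0)$ is trivial); these are all finite-dimensional simple $A\otimes\mathfrak{g}$-modules. $\mathrm{Ext}^1$ is the Yoneda extension group in the category of finite-dimensional $A\otimes\mathfrak{g}$-modules. *)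

theory Defs
  imports "Jordan_Normal_Form.Matrix"
begin

text \<open>A finite-dimensional complex Lie algebra g is presented as C^d (carrier_vec d)
  with a bracket br.\<close>

definition cvsubspace :: "nat \<Rightarrow> complex vec set \<Rightarrow> bool" where
  "cvsubspace d S \<longleftrightarrow> S \<subseteq> carrier_vec d \<and> 0\<^sub>v d \<in> S \<and>
     (\<forall>x\<in>S. \<forall>y\<in>S. x + y \<in> S) \<and> (\<forall>c. \<forall>x\<in>S. c \<cdot>\<^sub>v x \<in> S)"

definition lie_algebra :: "nat \<Rightarrow> (complex vec \<Rightarrow> complex vec \<Rightarrow> complex vec) \<Rightarrow> bool" where
  "lie_algebra d br \<longleftrightarrow>
     (\<forall>x\<in>carrier_vec d. \<forall>y\<in>carrier_vec d. br x y \<in> carrier_vec d) \<and>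
     (\<forall>x\<in>carrier_vec d. \<forall>y\<in>carrier_vec d. \<forall>z\<in>carrier_vec d. br (x + y) z = br x z + br y z) \<and>
     (\<forall>c. \<forall>x\<in>carrier_vec d. \<forall>y\<in>carrier_vec d. br (c \<cdot>\<^sub>v x) y = c \<cdot>\<^sub>v br x y) \<and>
     (\<forall>x\<in>carrier_vec d. br x x = 0\<^sub>v d) \<and>
     (\<forall>x\<in>carrier_vec d. \<forall>y\<in>carrier_vec d. \<forall>z\<in>carrier_vec d.
        br x (br y z) + br y (br z x) + br z (br x y) = 0\<^sub>v d)"

definition bracket_sub :: "nat \<Rightarrow> (complex vec \<Rightarrow> complex vec \<Rightarrow> complex vec)
    \<Rightarrow> complex vec set \<Rightarrow> complex vec set \<Rightarrow> complex vec set" where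
  "bracket_sub d br I J = \<Inter>{S. cvsubspace d S \<and> {br x y |x y. x \<in> I \<and> y \<in> J} \<subseteq> S}"

primrec derived_series :: "nat \<Rightarrow> (complex vec \<Rightarrow> complex vec \<Rightarrow> complex vec)
    \<Rightarrow> complex vec set \<Rightarrow> nat \<Rightarrow> complex vec set" where
  "derived_series d br I 0 = I"
| "derived_series d br I (Suc k) =
     bracket_sub d br (derived_series d br I k) (derived_series d br I k)"

definition lie_ideal :: "nat \<Rightarrow> (complex vec \<Rightarrow> complex vec \<Rightarrow> complex vec) \<Rightarrow> complex vec set \<Rightarrow> bool" where
  "lie_ideal d br I \<longleftrightarrow> cvsubspace d I \<and> (\<forall>x\<in>carrier_vec d. \<forall>y\<in>I. br x y \<in> I)"

definition solvable_ideal :: "nat \<Rightarrow> (complex vec \<Rightarrow> complex vec \<Rightarrow> complex vec) \<Rightarrow> complex vec set \<Rightarrow> bool" where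
  "solvable_ideal d br I \<longleftrightarrow> (\<exists>k. derived_series d br I k = {0\<^sub>v d})"

definition semisimple :: "nat \<Rightarrow> (complex vec \<Rightarrow> complex vec \<Rightarrow> complex vec) \<Rightarrow> bool" where
  "semisimple d br \<longleftrightarrow> lie_algebra d br \<and>
     (\<forall>I. lie_ideal d br I \<and> solvable_ideal d br I \<longrightarrow> I = {0\<^sub>v d})"

definition g_rep :: "nat \<Rightarrow> (complex vec \<Rightarrow> complex vec \<Rightarrow> complex vec) \<Rightarrow> nat
    \<Rightarrow> (complex vec \<Rightarrow> complex mat) \<Rightarrow> bool" where
  "g_rep d br n \<rho> \<longleftrightarrow>
     (\<forall>x\<in>carrier_vec d. \<rho> x \<in> carrier_mat n n) \<and>
     (\<forall>x\<in>carrier_vec d. \<forall>y\<in>carrier_vec d. \<rho> (x + y) = \<rho> x + \<rho> y) \<and>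
     (\<forall>c. \<forall>x\<in>carrier_vec d. \<rho> (c \<cdot>\<^sub>v x) = c \<cdot>\<^sub>m \<rho> x) \<and>
     (\<forall>x\<in>carrier_vec d. \<forall>y\<in>carrier_vec d. \<rho> (br x y) = \<rho> x * \<rho> y - \<rho> y * \<rho> x)"

definition g_simple :: "nat \<Rightarrow> nat \<Rightarrow> (complex vec \<Rightarrow> complex mat) \<Rightarrow> bool" where
  "g_simple d n \<rho> \<longleftrightarrow> n > 0 \<and>
     (\<forall>W. cvsubspace n W \<and> (\<forall>x\<in>carrier_vec d. \<forall>w\<in>W. \<rho> x *\<^sub>v w \<in> W)
        \<longrightarrow> W = {0\<^sub>v n} \<or> W = carrier_vec n)"

text \<open>A is a commutative ring 'a together with a unital ring homomorphism emb : C -> A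
  (its C-algebra structure).\<close>

definition calg_hom :: "(complex \<Rightarrow> 'a::comm_ring_1) \<Rightarrow> bool" where
  "calg_hom emb \<longleftrightarrow> emb 1 = 1 \<and> (\<forall>x y. emb (x + y) = emb x + emb y) \<and>
     (\<forall>x y. emb (x * y) = emb x * emb y)"

definition gen_subalg :: "(complex \<Rightarrow> 'a::comm_ring_1) \<Rightarrow> 'a set \<Rightarrow> 'a set" where
  "gen_subalg emb S = \<Inter>{B. range emb \<subseteq> B \<and> S \<subseteq> B \<and> (\<forall>x\<in>B. \<forall>y\<in>B. x + y \<in> B \<and> x * y \<in> B)}"

definition fin_gen :: "(complex \<Rightarrow> 'a::comm_ring_1) \<Rightarrow> bool" where
  "fin_gen emb \<longleftrightarrow> (\<exists>S. finite S \<and> gen_subalg emb S = UNIV)"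

definition ring_ideal :: "'a::comm_ring_1 set \<Rightarrow> bool" where
  "ring_ideal I \<longleftrightarrow> 0 \<in> I \<and> (\<forall>x\<in>I. \<forall>y\<in>I. x + y \<in> I) \<and> (\<forall>a. \<forall>x\<in>I. a * x \<in> I)"

definition max_ideal :: "'a::comm_ring_1 set \<Rightarrow> bool" where
  "max_ideal m \<longleftrightarrow> ring_ideal m \<and> m \<noteq> UNIV \<and>
     (\<forall>J. ring_ideal J \<and> m \<subseteq> J \<longrightarrow> J = m \<or> J = UNIV)"

text \<open>a_m: the image of a in A/m = C, i.e. the scalar c with a - c in m.\<close>
definition eval_at :: "(complex \<Rightarrow> 'a::comm_ring_1) \<Rightarrow> 'a set \<Rightarrow> 'a \<Rightarrow> complex" where
  "eval_at emb m a = (THE c. a - emb c \<in> m)"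

text \<open>An (A tensor_C g)-module structure on C^n is given by a C-bilinear map
  rho : A x g -> gl_n(C) with [rho(a,x), rho(b,y)] = rho(ab,[x,y]).\<close>

type_synonym 'a agmod = "nat \<times> ('a \<Rightarrow> complex vec \<Rightarrow> complex mat)"

definition ag_rep :: "(complex \<Rightarrow> 'a::comm_ring_1) \<Rightarrow> nat \<Rightarrow> (complex vec \<Rightarrow> complex vec \<Rightarrow> complex vec)
    \<Rightarrow> 'a agmod \<Rightarrow> bool" where
  "ag_rep emb d br M \<longleftrightarrow> (case M of (n, \<rho>) \<Rightarrow>
     (\<forall>a. \<forall>x\<in>carrier_vec d. \<rho> a x \<in> carrier_mat n n) \<and>
     (\<forall>a b. \<forall>x\<in>carrier_vec d. \<rho> (a + b) x = \<rho> a x + \<rho> b x) \<and>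
     (\<forall>c a. \<forall>x\<in>carrier_vec d. \<rho> (emb c * a) x = c \<cdot>\<^sub>m \<rho> a x) \<and>
     (\<forall>a. \<forall>x\<in>carrier_vec d. \<forall>y\<in>carrier_vec d. \<rho> a (x + y) = \<rho> a x + \<rho> a y) \<and>
     (\<forall>c a. \<forall>x\<in>carrier_vec d. \<rho> a (c \<cdot>\<^sub>v x) = c \<cdot>\<^sub>m \<rho> a x) \<and>
     (\<forall>a b. \<forall>x\<in>carrier_vec d. \<forall>y\<in>carrier_vec d.
        \<rho> (a * b) (br x y) = \<rho> a x * \<rho> b y - \<rho> b y * \<rho> a x))"

definition ag_hom :: "nat \<Rightarrow> 'a agmod \<Rightarrow> 'a agmod \<Rightarrow> complex mat \<Rightarrow> bool" where
  "ag_hom d M N T \<longleftrightarrow> T \<in> carrier_mat (fst N) (fst M) \<and>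
     (\<forall>a. \<forall>x\<in>carrier_vec d. T * snd M a x = snd N a x * T)"

text \<open>Ext^1(M,N) \<noteq> 0 (Yoneda, in the category of finite-dimensional modules):
  there is a non-split short exact sequence 0 -> N -f-> E -g-> M -> 0.\<close>
definition Ext1_nonzero :: "(complex \<Rightarrow> 'a::comm_ring_1) \<Rightarrow> nat \<Rightarrow> (complex vec \<Rightarrow> complex vec \<Rightarrow> complex vec)
    \<Rightarrow> 'a agmod \<Rightarrow> 'a agmod \<Rightarrow> bool" where
  "Ext1_nonzero emb d br M N \<longleftrightarrow> (\<exists>E f g.
     ag_rep emb d br E \<and> ag_hom d N E f \<and> ag_hom d E M g \<and>
     (\<forall>v\<in>carrier_vec (fst N). f *\<^sub>v v = 0\<^sub>v (fst E) \<longrightarrow> v = 0\<^sub>v (fst N)) \<and>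
     (\<forall>w\<in>carrier_vec (fst M). \<exists>u\<in>carrier_vec (fst E). g *\<^sub>v u = w) \<and>
     {f *\<^sub>v v |v. v \<in> carrier_vec (fst N)} = {u \<in> carrier_vec (fst E). g *\<^sub>v u = 0\<^sub>v (fst M)} \<and>
     \<not> (\<exists>s. ag_hom d M E s \<and> g * s = 1\<^sub>m (fst M)))"

definition kron :: "complex mat \<Rightarrow> complex mat \<Rightarrow> complex mat" where
  "kron A B = mat (dim_row A * dim_row B) (dim_col A * dim_col B)
     (\<lambda>(i, j). A $$ (i div dim_row B, j div dim_col B) * B $$ (i mod dim_row B, j mod dim_col B))"

definition tensor_mod :: "'a agmod \<Rightarrow> 'a agmod \<Rightarrow> 'a agmod" where
  "tensor_mod M N = (fst M * fst N,
     \<lambda>a x. kron (snd M a x) (1\<^sub>m (fst N)) + kron (1\<^sub>m (fst M)) (snd N a x))"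

text \<open>V_m(V): the g-module V with a tensor x acting by a_m x.\<close>
definition eval_mod :: "(complex \<Rightarrow> 'a::comm_ring_1) \<Rightarrow> 'a set \<Rightarrow> nat \<times> (complex vec \<Rightarrow> complex mat)
    \<Rightarrow> 'a agmod" where
  "eval_mod emb m V = (fst V, \<lambda>a x. eval_at emb m a \<cdot>\<^sub>m snd V x)"

definition trivial_mod :: "'a agmod" where
  "trivial_mod = (1, \<lambda>a x. 0\<^sub>m 1 1)"

text \<open>A element pi of P is encoded by a list of pairs (m, V) listing supp pi
  (distinct maximal ideals) with V a simple g-module of highest weight pi(m) \<noteq> 0
  (i.e. a nontrivial finite-dimensional simple g-module).\<close>

type_synonym 'a pidata = "('a set \<times> (nat \<times> (complex vec \<Rightarrow> complex mat))) list"

definition valid_pi :: "nat \<Rightarrow> (complex vec \<Rightarrow> complex vec \<Rightarrow> complex vec) \<Rightarrow> 'a::comm_ring_1 pidata \<Rightarrow> bool" where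
  "valid_pi d br ps \<longleftrightarrow> distinct (map fst ps) \<and>
     (\<forall>(m, V) \<in> set ps. max_ideal m \<and> g_rep d br (fst V) (snd V) \<and> g_simple d (fst V) (snd V) \<and>
        (\<exists>x\<in>carrier_vec d. snd V x \<noteq> 0\<^sub>m (fst V) (fst V)))"

definition Vpi :: "(complex \<Rightarrow> 'a::comm_ring_1) \<Rightarrow> 'a pidata \<Rightarrow> 'a agmod" where
  "Vpi emb ps = foldr (\<lambda>(m, V) acc. tensor_mod (eval_mod emb m V) acc) ps trivial_mod"

end

theory Submission
  imports Defs
begin


lemma kron_dims[simp]: "dim_row (kron A B) = dim_row A * dim_row B" "dim_col (kron A B) = dim_col A * dim_col B"
  by (simp_all add: kron_def)

lemma kron_index: "i < dim_row A * dim_row B \<Longrightarrow> j < dim_col A * dim_col B \<Longrightarrow>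
  kron A B $$ (i,j) = A $$ (i div dim_row B, j div dim_col B) * B $$ (i mod dim_row B, j mod dim_col B)"
  by (simp add: kron_def)

lemma sum_split_kr:
  fixes g :: "nat \<Rightarrow> complex"
  shows "(\<Sum>j<k*r. g j) = (\<Sum>p<k. \<Sum>t<r. g (p*r+t))"
proof -
  have "(\<Sum>j<k*r. g j) = (\<Sum>p<k. sum g {p*r..<p*r+r})" using sum.nat_group[of g r k] by simp
  also have "\<dots> = (\<Sum>p<k. \<Sum>t<r. g (p*r+t))"
  proof (rule sum.cong[OF refl])
    fix p
    have "sum g {0 + p*r..<r + p*r} = (\<Sum>t=0..<r. g (t + p*r))" by (rule sum.shift_bounds_nat_ivl)
    then show "sum g {p*r..<p*r+r} = (\<Sum>t<r. g (p*r+t))" by (simp add: add.commute atLeast0LessThan)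
  qed
  finally show ?thesis .
qed

lemma idx_lt: "q < (k::nat) \<Longrightarrow> t < r \<Longrightarrow> q*r+t < k*r"
proof -
  assume q: "q < k" and t: "t < r"
  have "q*r + t < (q+1)*r" using t by simp
  also have "(q+1)*r \<le> k*r" using q by (intro mult_right_mono) auto
  finally show ?thesis .
qed

lemma K1:
  fixes A :: "complex mat"
  assumes A: "A \<in> carrier_mat k k" and v: "v \<in> carrier_vec (k*r)" and q: "q < k" and t: "t < r"
  shows "(kron A (1\<^sub>m r) *\<^sub>v v) $ (q*r+t) = (\<Sum>p<k. A $$ (q,p) * v $ (p*r+t))"
proof -
  have i: "q*r+t < k*r" using q t by (rule idx_lt)
  have "(kron A (1\<^sub>m r) *\<^sub>v v) $ (q*r+t) = (\<Sum>j<k*r. kron A (1\<^sub>m r) $$ (q*r+t, j) * v $ j)"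
    using A v i by (simp add: mult_mat_vec_def scalar_prod_def atLeast0LessThan)
  also have "\<dots> = (\<Sum>p<k. \<Sum>t'<r. kron A (1\<^sub>m r) $$ (q*r+t, p*r+t') * v $ (p*r+t'))"
    by (rule sum_split_kr)
  also have "\<dots> = (\<Sum>p<k. \<Sum>t'<r. (if t' = t then A $$ (q,p) * v $ (p*r+t) else 0))"
  proof (intro sum.cong refl)
    fix p t' assume p: "p \<in> {..<k}" and t': "t' \<in> {..<r}"
    have j: "p*r+t' < k*r" using p t' by (intro idx_lt) auto
    show "kron A (1\<^sub>m r) $$ (q*r+t, p*r+t') * v $ (p*r+t') = (if t' = t then A $$ (q,p) * v $ (p*r+t) else 0)"
      using A i j t t' by (simp add: kron_index)
  qed
  also have "\<dots> = (\<Sum>p<k. A $$ (q,p) * v $ (p*r+t))" using t by simp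
  finally show ?thesis .
qed

lemma K2:
  fixes B :: "complex mat"
  assumes B: "B \<in> carrier_mat r r" and v: "v \<in> carrier_vec (k*r)" and q: "q < k" and t: "t < r"
  shows "(kron (1\<^sub>m k) B *\<^sub>v v) $ (q*r+t) = (\<Sum>t'<r. B $$ (t,t') * v $ (q*r+t'))"
proof -
  have i: "q*r+t < k*r" using q t by (rule idx_lt)
  have "(kron (1\<^sub>m k) B *\<^sub>v v) $ (q*r+t) = (\<Sum>j<k*r. kron (1\<^sub>m k) B $$ (q*r+t, j) * v $ j)"
    using B v i by (simp add: mult_mat_vec_def scalar_prod_def atLeast0LessThan)
  also have "\<dots> = (\<Sum>p<k. \<Sum>t'<r. kron (1\<^sub>m k) B $$ (q*r+t, p*r+t') * v $ (p*r+t'))"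
    by (rule sum_split_kr)
  also have "\<dots> = (\<Sum>p<k. \<Sum>t'<r. (if p = q then B $$ (t,t') * v $ (q*r+t') else 0))"
  proof (intro sum.cong refl)
    fix p t' assume p: "p \<in> {..<k}" and t': "t' \<in> {..<r}"
    have j: "p*r+t' < k*r" using p t' by (intro idx_lt) auto
    show "kron (1\<^sub>m k) B $$ (q*r+t, p*r+t') * v $ (p*r+t') = (if p = q then B $$ (t,t') * v $ (q*r+t') else 0)"
      using B i j t t' p q by (simp add: kron_index)
  qed
  also have "\<dots> = (\<Sum>p<k. (if p = q then (\<Sum>t'<r. B $$ (t,t') * v $ (q*r+t')) else 0))"
    by (intro sum.cong refl) simp
  also have "\<dots> = (\<Sum>t'<r. B $$ (t,t') * v $ (q*r+t'))" using q by simp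
  finally show ?thesis .
qed

lemma idx_decomp: "i < k*(r::nat) \<Longrightarrow> i = (i div r)*r + i mod r \<and> i div r < k \<and> i mod r < r"
proof -
  assume i: "i < k*r"
  then have r: "r > 0" by (cases r) auto
  show ?thesis using i r by (auto simp: less_mult_imp_div_less)
qed

definition NK :: "'b set \<Rightarrow> nat \<Rightarrow> ('b \<Rightarrow> complex mat) \<Rightarrow> bool" where
  "NK X n F \<longleftrightarrow> (\<forall>v\<in>carrier_vec n. (\<forall>x\<in>X. F x *\<^sub>v v = 0\<^sub>v n) \<longrightarrow> v = 0\<^sub>v n)"

definition SP :: "'b set \<Rightarrow> nat \<Rightarrow> ('b \<Rightarrow> complex mat) \<Rightarrow> bool" where
  "SP X n F \<longleftrightarrow> (\<forall>S. cvsubspace n S \<and> (\<forall>x\<in>X. \<forall>u\<in>carrier_vec n. F x *\<^sub>v u \<in> S) \<longrightarrow> S = carrier_vec n)"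

lemma mvec_index: "A \<in> carrier_mat k k \<Longrightarrow> a \<in> carrier_vec k \<Longrightarrow> q < k \<Longrightarrow>
   (A *\<^sub>v a) $ q = (\<Sum>p<k. A $$ (q,p) * a $ p)"
  by (simp add: mult_mat_vec_def scalar_prod_def atLeast0LessThan)

lemma T1:
  assumes A: "\<forall>x\<in>X. A x \<in> carrier_mat k k" and nk: "NK X k A"
  shows "NK X (k*r) (\<lambda>x. kron (A x) (1\<^sub>m r))"
  unfolding NK_def
proof (intro ballI impI)
  fix v :: "complex vec" assume v: "v \<in> carrier_vec (k*r)" and H: "\<forall>x\<in>X. kron (A x) (1\<^sub>m r) *\<^sub>v v = 0\<^sub>v (k*r)"
  have z: "v $ (p*r+t) = 0" if p: "p < k" and t: "t < r" for p t
  proof -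
    define s where "s = vec k (\<lambda>p. v $ (p*r+t))"
    have s: "s \<in> carrier_vec k" by (simp add: s_def)
    have "\<forall>x\<in>X. A x *\<^sub>v s = 0\<^sub>v k"
    proof
      fix x assume x: "x \<in> X"
      show "A x *\<^sub>v s = 0\<^sub>v k"
      proof (rule eq_vecI)
        fix q assume q: "q < dim_vec (0\<^sub>v k)"
        then have q: "q < k" by simp
        have "(A x *\<^sub>v s) $ q = (\<Sum>p<k. A x $$ (q,p) * v $ (p*r+t))"
          using mvec_index[of "A x" k s q] A x s q by (simp add: s_def)
        also have "\<dots> = (kron (A x) (1\<^sub>m r) *\<^sub>v v) $ (q*r+t)"
          using K1[of "A x" k v r q t] A x v q t by simp
        also have "\<dots> = 0" using H x idx_lt[OF q t] by simp
        finally show "(A x *\<^sub>v s) $ q = 0\<^sub>v k $ q" using q by simp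
      qed (insert A x, auto)
    qed
    then have "s = 0\<^sub>v k" using nk s unfolding NK_def by blast
    then have "s $ p = 0" using p by simp
    then show ?thesis using p by (simp add: s_def)
  qed
  show "v = 0\<^sub>v (k*r)"
  proof (rule eq_vecI)
    fix i assume "i < dim_vec (0\<^sub>v (k*r))"
    then have i: "i < k*r" by simp
    from idx_decomp[OF i] z[of "i div r" "i mod r"] have "v $ i = 0" by metis
    then show "v $ i = 0\<^sub>v (k*r) $ i" using i by simp
  qed (insert v, auto)
qed

lemma T2:
  assumes B: "\<forall>x\<in>X. B x \<in> carrier_mat r r" and nk: "NK X r B"
  shows "NK X (k*r) (\<lambda>x. kron (1\<^sub>m k) (B x))"
  unfolding NK_def
proof (intro ballI impI)
  fix v :: "complex vec" assume v: "v \<in> carrier_vec (k*r)" and H: "\<forall>x\<in>X. kron (1\<^sub>m k) (B x) *\<^sub>v v = 0\<^sub>v (k*r)"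
  have z: "v $ (q*r+t) = 0" if q: "q < k" and t: "t < r" for q t
  proof -
    define s where "s = vec r (\<lambda>t. v $ (q*r+t))"
    have s: "s \<in> carrier_vec r" by (simp add: s_def)
    have "\<forall>x\<in>X. B x *\<^sub>v s = 0\<^sub>v r"
    proof
      fix x assume x: "x \<in> X"
      show "B x *\<^sub>v s = 0\<^sub>v r"
      proof (rule eq_vecI)
        fix t' assume t': "t' < dim_vec (0\<^sub>v r)"
        then have t': "t' < r" by simp
        have "(B x *\<^sub>v s) $ t' = (\<Sum>t<r. B x $$ (t',t) * v $ (q*r+t))"
          using mvec_index[of "B x" r s t'] B x s t' by (simp add: s_def)
        also have "\<dots> = (kron (1\<^sub>m k) (B x) *\<^sub>v v) $ (q*r+t')"
          using K2[of "B x" r v k q t'] B x v q t' by simp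
        also have "\<dots> = 0" using H x idx_lt[OF q t'] by simp
        finally show "(B x *\<^sub>v s) $ t' = 0\<^sub>v r $ t'" using t' by simp
      qed (insert B x, auto)
    qed
    then have "s = 0\<^sub>v r" using nk s unfolding NK_def by blast
    then have "s $ t = 0" using t by simp
    then show ?thesis using t by (simp add: s_def)
  qed
  show "v = 0\<^sub>v (k*r)"
  proof (rule eq_vecI)
    fix i assume "i < dim_vec (0\<^sub>v (k*r))"
    then have i: "i < k*r" by simp
    from idx_decomp[OF i] z[of "i div r" "i mod r"] have "v $ i = 0" by metis
    then show "v $ i = 0\<^sub>v (k*r) $ i" using i by simp
  qed (insert v, auto)
qed


lemma cvsub_sum: "cvsubspace n S \<Longrightarrow> x \<in> S \<Longrightarrow> y \<in> S \<Longrightarrow> x + y \<in> S"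
  and cvsub_smult: "cvsubspace n S \<Longrightarrow> x \<in> S \<Longrightarrow> c \<cdot>\<^sub>v x \<in> S"
  and cvsub_zero: "cvsubspace n S \<Longrightarrow> 0\<^sub>v n \<in> S"
  and cvsub_carr: "cvsubspace n S \<Longrightarrow> x \<in> S \<Longrightarrow> x \<in> carrier_vec n"
  by (auto simp: cvsubspace_def)

lemma T3:
  assumes A: "\<forall>x\<in>X. A x \<in> carrier_mat k k" and sp: "SP X k A"
  shows "SP X (k*r) (\<lambda>x. kron (A x) (1\<^sub>m r))"
  unfolding SP_def
proof (intro allI impI)
  fix S assume "cvsubspace (k*r) S \<and> (\<forall>x\<in>X. \<forall>u\<in>carrier_vec (k*r). kron (A x) (1\<^sub>m r) *\<^sub>v u \<in> S)"
  then have S: "cvsubspace (k*r) S" and H: "\<forall>x\<in>X. \<forall>u\<in>carrier_vec (k*r). kron (A x) (1\<^sub>m r) *\<^sub>v u \<in> S" by auto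
  define em where "em t a = vec (k*r) (\<lambda>i. if i mod r = t then a $ (i div r) else 0)" for t and a :: "complex vec"
  have em_carr: "em t a \<in> carrier_vec (k*r)" for t a by (simp add: em_def)
  have em_comm: "kron (A x) (1\<^sub>m r) *\<^sub>v em t a = em t (A x *\<^sub>v a)" if x: "x \<in> X" and a: "a \<in> carrier_vec k" and t: "t < r" for x a t
  proof (rule eq_vecI)
    fix i assume "i < dim_vec (em t (A x *\<^sub>v a))"
    then have i: "i < k*r" by (simp add: em_def)
    note d = idx_decomp[OF i]
    define q where "q = i div r" define t' where "t' = i mod r"
    have iq: "i = q*r+t'" and q: "q < k" and t': "t' < r" using d by (auto simp: q_def t'_def)
    have "(kron (A x) (1\<^sub>m r) *\<^sub>v em t a) $ i = (\<Sum>p<k. A x $$ (q,p) * em t a $ (p*r+t'))"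
      unfolding iq using K1[of "A x" k "em t a" r q t'] A x q t' em_carr by simp
    also have "\<dots> = (\<Sum>p<k. A x $$ (q,p) * (if t' = t then a $ p else 0))"
      using t t' by (intro sum.cong refl) (auto simp: em_def idx_lt)
    also have "\<dots> = (if t' = t then (A x *\<^sub>v a) $ q else 0)"
      using mvec_index[of "A x" k a q] A x a q by auto
    also have "\<dots> = em t (A x *\<^sub>v a) $ i" using i q by (simp add: em_def q_def t'_def)
    finally show "(kron (A x) (1\<^sub>m r) *\<^sub>v em t a) $ i = em t (A x *\<^sub>v a) $ i" .
  qed (insert A x, auto simp add: em_def)
  have slice: "em t a \<in> S" if a: "a \<in> carrier_vec k" and t: "t < r" for a t
  proof -
    define St where "St = {b \<in> carrier_vec k. em t b \<in> S}"
    have em0: "em t (0\<^sub>v k) = 0\<^sub>v (k*r)" by (rule eq_vecI) (auto simp: em_def idx_decomp)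
    have emadd: "em t (b + c) = em t b + em t c" if "b \<in> carrier_vec k" "c \<in> carrier_vec k" for b c
      by (rule eq_vecI) (insert that, auto simp: em_def idx_decomp)
    have emsm: "em t (z \<cdot>\<^sub>v b) = z \<cdot>\<^sub>v em t b" if "b \<in> carrier_vec k" for b z
      by (rule eq_vecI) (insert that, auto simp: em_def idx_decomp)
    have "cvsubspace k St" unfolding cvsubspace_def St_def
      using em0 emadd emsm cvsub_zero[OF S] cvsub_sum[OF S] cvsub_smult[OF S] by auto
    moreover have "\<forall>x\<in>X. \<forall>u\<in>carrier_vec k. A x *\<^sub>v u \<in> St"
      using A H em_comm em_carr t unfolding St_def by (metis (mono_tags, lifting) mem_Collect_eq mult_mat_vec_carrier)
    ultimately have "St = carrier_vec k" using sp unfolding SP_def by blast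
    then show ?thesis using a St_def by blast
  qed
  define P where "P n w = vec (k*r) (\<lambda>i. if i mod r < n then w $ i else 0)" for n and w :: "complex vec"
  have "P n w \<in> S" if w: "w \<in> carrier_vec (k*r)" and n: "n \<le> r" for n w
    using n
  proof (induction n)
    case 0
    have "P 0 w = 0\<^sub>v (k*r)" by (rule eq_vecI) (auto simp: P_def)
    then show ?case using cvsub_zero[OF S] by simp
  next
    case (Suc n)
    define a where "a = vec k (\<lambda>p. w $ (p*r+n))"
    have "P (Suc n) w = P n w + em n a"
      by (rule eq_vecI) (auto simp: P_def em_def a_def idx_decomp less_Suc_eq)
    moreover have "P n w \<in> S" using Suc by simp
    moreover have "em n a \<in> S" using slice[of a n] Suc by (simp add: a_def)
    ultimately show ?case using cvsub_sum[OF S] by simp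
  qed
  moreover have "P r w = w" if "w \<in> carrier_vec (k*r)" for w
    by (rule eq_vecI) (insert that, auto simp: P_def idx_decomp)
  ultimately have "carrier_vec (k*r) \<subseteq> S" by (metis order_refl subsetI)
  then show "S = carrier_vec (k*r)" using S unfolding cvsubspace_def by blast
qed


lemma T4:
  assumes B: "\<forall>x\<in>X. B x \<in> carrier_mat r r" and sp: "SP X r B"
  shows "SP X (k*r) (\<lambda>x. kron (1\<^sub>m k) (B x))"
  unfolding SP_def
proof (intro allI impI)
  fix S assume "cvsubspace (k*r) S \<and> (\<forall>x\<in>X. \<forall>u\<in>carrier_vec (k*r). kron (1\<^sub>m k) (B x) *\<^sub>v u \<in> S)"
  then have S: "cvsubspace (k*r) S" and H: "\<forall>x\<in>X. \<forall>u\<in>carrier_vec (k*r). kron (1\<^sub>m k) (B x) *\<^sub>v u \<in> S" by auto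
  define em where "em q a = vec (k*r) (\<lambda>i. if i div r = q then a $ (i mod r) else 0)" for q and a :: "complex vec"
  have em_carr: "em q a \<in> carrier_vec (k*r)" for q a by (simp add: em_def)
  have em_comm: "kron (1\<^sub>m k) (B x) *\<^sub>v em q0 a = em q0 (B x *\<^sub>v a)" if x: "x \<in> X" and a: "a \<in> carrier_vec r" and q0: "q0 < k" for x a q0
  proof (rule eq_vecI)
    fix i assume "i < dim_vec (em q0 (B x *\<^sub>v a))"
    then have i: "i < k*r" by (simp add: em_def)
    note d = idx_decomp[OF i]
    define q where "q = i div r" define t' where "t' = i mod r"
    have iq: "i = q*r+t'" and q: "q < k" and t': "t' < r" using d by (auto simp: q_def t'_def)
    have "(kron (1\<^sub>m k) (B x) *\<^sub>v em q0 a) $ i = (\<Sum>t<r. B x $$ (t',t) * em q0 a $ (q*r+t))"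
      unfolding iq using K2[of "B x" r "em q0 a" k q t'] B x q t' em_carr by simp
    also have "\<dots> = (\<Sum>t<r. B x $$ (t',t) * (if q = q0 then a $ t else 0))"
      using q t' by (intro sum.cong refl) (auto simp: em_def idx_lt)
    also have "\<dots> = (if q = q0 then (B x *\<^sub>v a) $ t' else 0)"
      using mvec_index[of "B x" r a t'] B x a t' by auto
    also have "\<dots> = em q0 (B x *\<^sub>v a) $ i" using i t' by (simp add: em_def q_def t'_def)
    finally show "(kron (1\<^sub>m k) (B x) *\<^sub>v em q0 a) $ i = em q0 (B x *\<^sub>v a) $ i" .
  qed (insert B x, auto simp add: em_def)
  have slice: "em q a \<in> S" if a: "a \<in> carrier_vec r" and q: "q < k" for a q
  proof -
    define St where "St = {b \<in> carrier_vec r. em q b \<in> S}"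
    have em0: "em q (0\<^sub>v r) = 0\<^sub>v (k*r)" by (rule eq_vecI) (auto simp: em_def idx_decomp)
    have emadd: "em q (b + c) = em q b + em q c" if "b \<in> carrier_vec r" "c \<in> carrier_vec r" for b c
      by (rule eq_vecI) (insert that, auto simp: em_def idx_decomp)
    have emsm: "em q (z \<cdot>\<^sub>v b) = z \<cdot>\<^sub>v em q b" if "b \<in> carrier_vec r" for b z
      by (rule eq_vecI) (insert that, auto simp: em_def idx_decomp)
    have "cvsubspace r St" unfolding cvsubspace_def St_def
      using em0 emadd emsm cvsub_zero[OF S] cvsub_sum[OF S] cvsub_smult[OF S] by auto
    moreover have "\<forall>x\<in>X. \<forall>u\<in>carrier_vec r. B x *\<^sub>v u \<in> St"
      using B H em_comm em_carr q unfolding St_def by (metis (mono_tags, lifting) mem_Collect_eq mult_mat_vec_carrier)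
    ultimately have "St = carrier_vec r" using sp unfolding SP_def by blast
    then show ?thesis using a St_def by blast
  qed
  define P where "P n w = vec (k*r) (\<lambda>i. if i div r < n then w $ i else 0)" for n and w :: "complex vec"
  have "P n w \<in> S" if w: "w \<in> carrier_vec (k*r)" and n: "n \<le> k" for n w
    using n
  proof (induction n)
    case 0
    have "P 0 w = 0\<^sub>v (k*r)" by (rule eq_vecI) (auto simp: P_def)
    then show ?case using cvsub_zero[OF S] by simp
  next
    case (Suc n)
    define a where "a = vec r (\<lambda>t. w $ (n*r+t))"
    have "P (Suc n) w = P n w + em n a"
      by (rule eq_vecI) (auto simp: P_def em_def a_def idx_decomp less_Suc_eq)
    moreover have "P n w \<in> S" using Suc by simp
    moreover have "em n a \<in> S" using slice[of a n] Suc by (simp add: a_def)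
    ultimately show ?case using cvsub_sum[OF S] by simp
  qed
  moreover have "P k w = w" if "w \<in> carrier_vec (k*r)" for w
    by (rule eq_vecI) (insert that, auto simp: P_def idx_decomp)
  ultimately have "carrier_vec (k*r) \<subseteq> S" by (metis order_refl subsetI)
  then show "S = carrier_vec (k*r)" using S unfolding cvsubspace_def by blast
qed


lemma mat_vec_zero[simp]: "(A::complex mat) \<in> carrier_mat nr nc \<Longrightarrow> A *\<^sub>v 0\<^sub>v nc = 0\<^sub>v nr"
  by (rule eq_vecI) (auto simp: mult_mat_vec_def)

lemma zero_mat_vec[simp]: "v \<in> carrier_vec nc \<Longrightarrow> (0\<^sub>m nr nc :: complex mat) *\<^sub>v v = 0\<^sub>v nr"
  by (rule eq_vecI) (auto simp: mult_mat_vec_def)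

lemma smult_zero_vec[simp]: "(c::complex) \<cdot>\<^sub>v 0\<^sub>v n = 0\<^sub>v n"
  by (rule eq_vecI) auto

lemma mat_eq_vecs:
  fixes A B :: "complex mat"
  assumes A: "A \<in> carrier_mat nr nc" and B: "B \<in> carrier_mat nr nc"
    and H: "\<forall>v\<in>carrier_vec nc. A *\<^sub>v v = B *\<^sub>v v"
  shows "A = B"
proof (rule eq_matI)
  fix i j assume i: "i < dim_row B" and j: "j < dim_col B"
  have "A *\<^sub>v unit_vec nc j = B *\<^sub>v unit_vec nc j" using H by simp
  then have "(A *\<^sub>v unit_vec nc j) $ i = (B *\<^sub>v unit_vec nc j) $ i" by simp
  then show "A $$ (i,j) = B $$ (i,j)" using A B i j by (simp add: mult_mat_vec_def)
qed (insert A B, auto)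

lemma base_SP:
  assumes rep: "g_rep d br n \<rho>" and sim: "g_simple d n \<rho>" and nt: "\<exists>x\<in>carrier_vec d. \<rho> x \<noteq> 0\<^sub>m n n"
  shows "SP (carrier_vec d) n \<rho>"
  unfolding SP_def
proof (intro allI impI)
  fix S assume "cvsubspace n S \<and> (\<forall>x\<in>carrier_vec d. \<forall>u\<in>carrier_vec n. \<rho> x *\<^sub>v u \<in> S)"
  then have S: "cvsubspace n S" and H: "\<forall>x\<in>carrier_vec d. \<forall>u\<in>carrier_vec n. \<rho> x *\<^sub>v u \<in> S" by auto
  have carr: "\<forall>x\<in>carrier_vec d. \<rho> x \<in> carrier_mat n n" using rep by (simp add: g_rep_def)
  have inv: "\<forall>x\<in>carrier_vec d. \<forall>w\<in>S. \<rho> x *\<^sub>v w \<in> S" using H cvsub_carr[OF S] by blast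
  have "S = {0\<^sub>v n} \<or> S = carrier_vec n" using sim S inv unfolding g_simple_def by blast
  moreover have "S \<noteq> {0\<^sub>v n}"
  proof
    assume S0: "S = {0\<^sub>v n}"
    from nt obtain x where x: "x \<in> carrier_vec d" "\<rho> x \<noteq> 0\<^sub>m n n" by blast
    have "\<rho> x = 0\<^sub>m n n"
      by (rule mat_eq_vecs[of _ n n]) (insert carr x H S0, auto)
    with x show False by simp
  qed
  ultimately show "S = carrier_vec n" by blast
qed

lemma base_NK:
  assumes rep: "g_rep d br n \<rho>" and sim: "g_simple d n \<rho>" and nt: "\<exists>x\<in>carrier_vec d. \<rho> x \<noteq> 0\<^sub>m n n"
    and lie: "lie_algebra d br"
  shows "NK (carrier_vec d) n \<rho>"
  unfolding NK_def
proof (intro ballI impI)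
  fix v assume v: "v \<in> carrier_vec n" and Hv: "\<forall>x\<in>carrier_vec d. \<rho> x *\<^sub>v v = 0\<^sub>v n"
  have carr: "\<forall>x\<in>carrier_vec d. \<rho> x \<in> carrier_mat n n" using rep by (simp add: g_rep_def)
  have brc: "\<forall>x\<in>carrier_vec d. \<forall>y\<in>carrier_vec d. br x y \<in> carrier_vec d" using lie by (simp add: lie_algebra_def)
  have brr: "\<forall>x\<in>carrier_vec d. \<forall>y\<in>carrier_vec d. \<rho> (br x y) = \<rho> x * \<rho> y - \<rho> y * \<rho> x" using rep by (simp add: g_rep_def)
  define K where "K = {w \<in> carrier_vec n. \<forall>x\<in>carrier_vec d. \<rho> x *\<^sub>v w = 0\<^sub>v n}"
  have Ksub: "cvsubspace n K" unfolding cvsubspace_def K_def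
    using carr by (auto simp: mult_add_distrib_mat_vec mult_mat_vec)
  have Kinv: "\<forall>y\<in>carrier_vec d. \<forall>w\<in>K. \<rho> y *\<^sub>v w \<in> K"
  proof (intro ballI)
    fix y w :: "complex vec" assume y: "y \<in> carrier_vec d" and w: "w \<in> K"
    have wc: "w \<in> carrier_vec n" using w K_def by auto
    have "\<rho> x *\<^sub>v (\<rho> y *\<^sub>v w) = 0\<^sub>v n" if x: "x \<in> carrier_vec d" for x :: "complex vec"
    proof -
      have cx: "\<rho> x \<in> carrier_mat n n" and cy: "\<rho> y \<in> carrier_mat n n" and cb: "\<rho> (br x y) \<in> carrier_mat n n"
        using carr x y brc by auto
      have e: "\<rho> x * \<rho> y = \<rho> (br x y) + \<rho> y * \<rho> x"
        unfolding brr[rule_format, OF x y] using carr[rule_format, OF x] carr[rule_format, OF y] by (intro eq_matI) auto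
      have "\<rho> x *\<^sub>v (\<rho> y *\<^sub>v w) = (\<rho> x * \<rho> y) *\<^sub>v w" using cx cy wc by simp
      also have "\<dots> = \<rho> (br x y) *\<^sub>v w + \<rho> y *\<^sub>v (\<rho> x *\<^sub>v w)"
        unfolding e using cx cy cb wc by (simp add: add_mult_distrib_mat_vec[of _ n n])
      also have "\<dots> = 0\<^sub>v n" using w x y brc cy unfolding K_def by simp
      finally show ?thesis .
    qed
    then show "\<rho> y *\<^sub>v w \<in> K" using carr[rule_format, OF y] wc unfolding K_def by auto
  qed
  have "K = {0\<^sub>v n} \<or> K = carrier_vec n" using sim Ksub Kinv unfolding g_simple_def by blast
  moreover have "K \<noteq> carrier_vec n"
  proof
    assume K: "K = carrier_vec n"
    from nt obtain x where x: "x \<in> carrier_vec d" "\<rho> x \<noteq> 0\<^sub>m n n" by blast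
    have "\<rho> x = 0\<^sub>m n n"
      by (rule mat_eq_vecs[of _ n n]) (insert carr x K, auto simp: K_def set_eq_iff)
    with x show False by simp
  qed
  ultimately have "K = {0\<^sub>v n}" by blast
  moreover have "v \<in> K" using v Hv K_def by auto
  ultimately show "v = 0\<^sub>v n" by blast
qed


section \<open>Ideals and evaluation\<close>

lemma ri_multl: "ring_ideal I \<Longrightarrow> x \<in> I \<Longrightarrow> a * x \<in> I" by (simp add: ring_ideal_def)
lemma ri_multr: "ring_ideal I \<Longrightarrow> x \<in> I \<Longrightarrow> x * a \<in> I" by (simp add: ring_ideal_def mult.commute)
lemma ri_add: "ring_ideal I \<Longrightarrow> x \<in> I \<Longrightarrow> y \<in> I \<Longrightarrow> x + y \<in> I" by (simp add: ring_ideal_def)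
lemma ri_neg: "ring_ideal I \<Longrightarrow> x \<in> I \<Longrightarrow> - x \<in> I"
  using ri_multl[of I x "-1"] by simp
lemma ri_diff: "ring_ideal I \<Longrightarrow> x \<in> I \<Longrightarrow> y \<in> I \<Longrightarrow> x - y \<in> I"
  using ri_add[of I x "-y"] ri_neg[of I y] by simp

lemma emb_0: "calg_hom emb \<Longrightarrow> emb 0 = 0"
proof -
  assume h: "calg_hom emb"
  have "emb (0 + 0) = emb 0 + emb 0" using h unfolding calg_hom_def by blast
  then show ?thesis by simp
qed
lemma emb_diff: "calg_hom emb \<Longrightarrow> emb (x - y) = emb x - emb y"
proof -
  assume h: "calg_hom emb"
  have "emb ((x - y) + y) = emb (x - y) + emb y" using h unfolding calg_hom_def by blast
  then have "emb x = emb (x - y) + emb y" by simp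
  then show ?thesis by (simp add: algebra_simps)
qed

lemma eval_at_eq:
  assumes h: "calg_hom emb" and m: "max_ideal m" and a: "a - emb c \<in> m"
  shows "eval_at emb m a = c"
  unfolding eval_at_def
proof (rule the_equality)
  show "a - emb c \<in> m" by (rule a)
  fix c' assume a': "a - emb c' \<in> m"
  have ri: "ring_ideal m" using m by (simp add: max_ideal_def)
  have "(a - emb c') - (a - emb c) \<in> m" using ri_diff[OF ri a' a] .
  then have "emb c - emb c' \<in> m" by (simp add: algebra_simps)
  then have "emb (c - c') \<in> m" using emb_diff[OF h, of c c'] by simp
  show "c' = c"
  proof (rule ccontr)
    assume ne: "c' \<noteq> c"
    have "(c - c') * (1 / (c - c')) = 1" using ne by simp
    then have "emb (c - c') * emb (1 / (c - c')) = 1" using h unfolding calg_hom_def by metis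
    then have "1 \<in> m" using ri_multr[OF ri \<open>emb (c - c') \<in> m\<close>] by metis
    then have "\<forall>y. y \<in> m" using ri_multl[OF ri] by (metis mult.right_neutral)
    then show False using m by (auto simp: max_ideal_def)
  qed
qed

lemma eval_at_0: "calg_hom emb \<Longrightarrow> max_ideal m \<Longrightarrow> a \<in> m \<Longrightarrow> eval_at emb m a = 0"
  using eval_at_eq[of emb m a 0] emb_0[of emb] by simp
lemma eval_at_1: "calg_hom emb \<Longrightarrow> max_ideal m \<Longrightarrow> a - 1 \<in> m \<Longrightarrow> eval_at emb m a = 1"
  using eval_at_eq[of emb m a 1] by (simp add: calg_hom_def)

section \<open>Vpi computations\<close>

lemma Vpi_Nil: "Vpi emb [] = trivial_mod" by (simp add: Vpi_def)
lemma Vpi_Cons: "Vpi emb ((m,V)#ps) = tensor_mod (eval_mod emb m V) (Vpi emb ps)" by (simp add: Vpi_def)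
lemma Vpi_fst_Cons: "fst (Vpi emb ((m,V)#ps)) = fst V * fst (Vpi emb ps)"
  by (simp add: Vpi_Cons tensor_mod_def eval_mod_def)
lemma Vpi_snd_Cons: "snd (Vpi emb ((m,V)#ps)) a x =
   kron (eval_at emb m a \<cdot>\<^sub>m snd V x) (1\<^sub>m (fst (Vpi emb ps))) + kron (1\<^sub>m (fst V)) (snd (Vpi emb ps) a x)"
  by (simp add: Vpi_Cons tensor_mod_def eval_mod_def)

lemma Vpi_carr:
  assumes "\<forall>(m,V)\<in>set ps. g_rep d br (fst V) (snd V)" and x: "x \<in> carrier_vec d"
  shows "snd (Vpi emb ps) a x \<in> carrier_mat (fst (Vpi emb ps)) (fst (Vpi emb ps))"
  using assms(1)
proof (induction ps)
  case Nil then show ?case by (simp add: Vpi_Nil trivial_mod_def)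
next
  case (Cons p ps)
  obtain m V where p: "p = (m,V)" by (metis surj_pair)
  have "snd V x \<in> carrier_mat (fst V) (fst V)" using Cons.prems x p by (auto simp: g_rep_def)
  then show ?case using Cons p by (auto simp: Vpi_fst_Cons Vpi_snd_Cons)
qed

lemma idx_bounds: "i < k*(r::nat) \<Longrightarrow> i div r < k" "i < k*(r::nat) \<Longrightarrow> i mod r < r"
proof -
  assume i: "i < k*r"
  then have r: "r > 0" by (cases r) auto
  show "i div r < k" using i by (simp add: less_mult_imp_div_less)
next
  assume i: "i < k*r"
  then have r: "r > 0" by (cases r) auto
  show "i mod r < r" using r by simp
qed

lemma kron_carr: "A \<in> carrier_mat a a' \<Longrightarrow> B \<in> carrier_mat b b' \<Longrightarrow> kron A B \<in> carrier_mat (a*b) (a'*b')"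
  by (rule carrier_matI) (auto dest!: carrier_matD)

lemma kron_zero1: "kron (0\<^sub>m k k) (1\<^sub>m r) = (0\<^sub>m (k*r) (k*r) :: complex mat)"
  by (rule eq_matI) (auto simp: kron_index idx_bounds)
lemma kron_zero2: "kron (1\<^sub>m k) (0\<^sub>m r r) = (0\<^sub>m (k*r) (k*r) :: complex mat)"
  by (rule eq_matI) (auto simp: kron_index idx_bounds)
lemma smult_zero_mat: "(A::complex mat) \<in> carrier_mat k k \<Longrightarrow> 0 \<cdot>\<^sub>m A = 0\<^sub>m k k"
  by (rule eq_matI) auto
lemma smult_one_mat: "(A::complex mat) \<in> carrier_mat k k \<Longrightarrow> 1 \<cdot>\<^sub>m A = A"
  by (rule eq_matI) auto

lemma Vpi_zero:
  assumes h: "calg_hom emb" and ok: "\<forall>(m,V)\<in>set ps. max_ideal m \<and> g_rep d br (fst V) (snd V)"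
    and a: "\<forall>m\<in>fst ` set ps. a \<in> m" and x: "x \<in> carrier_vec d"
  shows "snd (Vpi emb ps) a x = 0\<^sub>m (fst (Vpi emb ps)) (fst (Vpi emb ps))"
  using ok a
proof (induction ps)
  case Nil then show ?case by (simp add: Vpi_Nil trivial_mod_def)
next
  case (Cons p ps)
  obtain m V where p: "p = (m,V)" by (metis surj_pair)
  have c: "snd V x \<in> carrier_mat (fst V) (fst V)" using Cons.prems x p by (auto simp: g_rep_def)
  have e: "eval_at emb m a = 0" using eval_at_0[OF h, of m a] Cons.prems p by auto
  have "snd (Vpi emb ps) a x = 0\<^sub>m (fst (Vpi emb ps)) (fst (Vpi emb ps))" using Cons p by auto
  then show ?case using c e p by (simp add: Vpi_fst_Cons Vpi_snd_Cons smult_zero_mat kron_zero1 kron_zero2)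
qed

lemma NK_cong: "(\<forall>x\<in>X. F x = G x) \<Longrightarrow> NK X n F = NK X n G" by (simp add: NK_def)
lemma SP_cong: "(\<forall>x\<in>X. F x = G x) \<Longrightarrow> SP X n F = SP X n G" by (simp add: SP_def)

lemma Vpi_designated:
  assumes h: "calg_hom emb" and lie: "lie_algebra d br"
    and ok: "\<forall>(m,V)\<in>set ps. max_ideal m \<and> g_rep d br (fst V) (snd V) \<and> g_simple d (fst V) (snd V) \<and>
        (\<exists>x\<in>carrier_vec d. snd V x \<noteq> 0\<^sub>m (fst V) (fst V))"
    and dist: "distinct (map fst ps)" and m1: "m1 \<in> fst ` set ps"
    and e1: "e - 1 \<in> m1" and e0: "\<forall>m\<in>fst ` set ps. m \<noteq> m1 \<longrightarrow> e \<in> m"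
  shows "NK (carrier_vec d) (fst (Vpi emb ps)) (\<lambda>x. snd (Vpi emb ps) e x) \<and>
         SP (carrier_vec d) (fst (Vpi emb ps)) (\<lambda>x. snd (Vpi emb ps) e x)"
  using ok dist m1 e0
proof (induction ps)
  case Nil then show ?case by simp
next
  case (Cons p ps)
  obtain m V where p: "p = (m,V)" by (metis surj_pair)
  have mV: "max_ideal m" "g_rep d br (fst V) (snd V)" "g_simple d (fst V) (snd V)"
     "\<exists>x\<in>carrier_vec d. snd V x \<noteq> 0\<^sub>m (fst V) (fst V)" using Cons.prems p by auto
  have okr: "\<forall>(m,V)\<in>set ps. max_ideal m \<and> g_rep d br (fst V) (snd V)" using Cons.prems by auto
  have c: "\<forall>x\<in>carrier_vec d. snd V x \<in> carrier_mat (fst V) (fst V)" using mV by (auto simp: g_rep_def)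
  have cr: "\<forall>x\<in>carrier_vec d. snd (Vpi emb ps) e x \<in> carrier_mat (fst (Vpi emb ps)) (fst (Vpi emb ps))"
  proof -
    have okr2: "\<forall>(m,V)\<in>set ps. g_rep d br (fst V) (snd V)" using okr by auto
    show ?thesis by (intro ballI Vpi_carr[OF okr2])
  qed
  show ?case
  proof (cases "m = m1")
    case True
    have nin: "m1 \<notin> fst ` set ps" using Cons.prems p True by auto
    have ez: "\<forall>m'\<in>fst ` set ps. e \<in> m'" using Cons.prems(4) nin p by auto
    have ev: "eval_at emb m e = 1" using eval_at_1[OF h mV(1)] e1 True by simp
    have eq: "\<forall>x\<in>carrier_vec d. snd (Vpi emb (p#ps)) e x = kron (snd V x) (1\<^sub>m (fst (Vpi emb ps)))"
    proof
      fix x :: "complex vec" assume x: "x \<in> carrier_vec d"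
      have "snd (Vpi emb ps) e x = 0\<^sub>m (fst (Vpi emb ps)) (fst (Vpi emb ps))"
        using Vpi_zero[OF h okr ez x] .
      moreover have "kron (snd V x) (1\<^sub>m (fst (Vpi emb ps))) \<in> carrier_mat (fst V * fst (Vpi emb ps)) (fst V * fst (Vpi emb ps))"
        using c x by (auto intro!: kron_carr)
      ultimately show "snd (Vpi emb (p#ps)) e x = kron (snd V x) (1\<^sub>m (fst (Vpi emb ps)))"
        using smult_one_mat[OF c[rule_format, OF x]] x ev p by (simp add: Vpi_snd_Cons kron_zero2)
    qed
    have fd: "fst (Vpi emb (p#ps)) = fst V * fst (Vpi emb ps)" using p by (simp add: Vpi_fst_Cons)
    show ?thesis unfolding fd using NK_cong[OF eq] SP_cong[OF eq]
      T1[OF c base_NK[OF mV(2) mV(3) mV(4) lie]] T3[OF c base_SP[OF mV(2) mV(3) mV(4)]] by simp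
  next
    case False
    have m1r: "m1 \<in> fst ` set ps" using Cons.prems(3) p False by auto
    have ez: "e \<in> m" using Cons.prems(4) p False by auto
    have ev: "eval_at emb m e = 0" using eval_at_0[OF h mV(1) ez] .
    have IH: "NK (carrier_vec d) (fst (Vpi emb ps)) (\<lambda>x. snd (Vpi emb ps) e x) \<and>
         SP (carrier_vec d) (fst (Vpi emb ps)) (\<lambda>x. snd (Vpi emb ps) e x)"
      using Cons m1r by auto
    have eq: "\<forall>x\<in>carrier_vec d. snd (Vpi emb (p#ps)) e x = kron (1\<^sub>m (fst V)) (snd (Vpi emb ps) e x)"
    proof
      fix x :: "complex vec" assume x: "x \<in> carrier_vec d"
      have "kron (1\<^sub>m (fst V)) (snd (Vpi emb ps) e x) \<in> carrier_mat (fst V * fst (Vpi emb ps)) (fst V * fst (Vpi emb ps))"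
        using cr x by (auto intro!: kron_carr)
      then show "snd (Vpi emb (p#ps)) e x = kron (1\<^sub>m (fst V)) (snd (Vpi emb ps) e x)"
        using smult_zero_mat[OF c[rule_format, OF x]] x ev p by (simp add: Vpi_snd_Cons kron_zero1)
    qed
    have fd: "fst (Vpi emb (p#ps)) = fst V * fst (Vpi emb ps)" using p by (simp add: Vpi_fst_Cons)
    show ?thesis unfolding fd using NK_cong[OF eq] SP_cong[OF eq] IH T2[OF cr] T4[OF cr] by simp
  qed
qed




lemma comax:
  assumes m: "max_ideal m" and m1: "max_ideal m1" and ne: "m \<noteq> m1"
  shows "\<exists>q\<in>m. q - 1 \<in> m1"
proof -
  have ri: "ring_ideal m" and ri1: "ring_ideal m1" using m m1 by (auto simp: max_ideal_def)
  define J where "J = {x + y |x y. x \<in> m \<and> y \<in> m1}"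
  have "ring_ideal J" unfolding ring_ideal_def J_def
  proof (intro conjI ballI allI)
    show "0 \<in> {x + y |x y. x \<in> m \<and> y \<in> m1}" using ri ri1 by (force simp: ring_ideal_def)
  next
    fix z w assume "z \<in> {x + y |x y. x \<in> m \<and> y \<in> m1}" "w \<in> {x + y |x y. x \<in> m \<and> y \<in> m1}"
    then obtain x y x' y' where "z = x + y" "x \<in> m" "y \<in> m1" "w = x' + y'" "x' \<in> m" "y' \<in> m1" by blast
    then have "z + w = (x + x') + (y + y')" "x + x' \<in> m" "y + y' \<in> m1"
      using ri_add[OF ri] ri_add[OF ri1] by (auto simp: algebra_simps)
    then show "z + w \<in> {x + y |x y. x \<in> m \<and> y \<in> m1}" by blast
  next
    fix a z assume "z \<in> {x + y |x y. x \<in> m \<and> y \<in> m1}"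
    then obtain x y where "z = x + y" "x \<in> m" "y \<in> m1" by blast
    then have "a * z = a * x + a * y" "a * x \<in> m" "a * y \<in> m1"
      using ri_multl[OF ri \<open>x \<in> m\<close>] ri_multl[OF ri1 \<open>y \<in> m1\<close>] by (auto simp: algebra_simps)
    then show "a * z \<in> {x + y |x y. x \<in> m \<and> y \<in> m1}" by blast
  qed
  moreover have "m1 \<subseteq> J" unfolding J_def using ri by (force simp: ring_ideal_def)
  ultimately have "J = m1 \<or> J = UNIV" using m1 unfolding max_ideal_def by blast
  moreover have "J \<noteq> m1"
  proof
    assume "J = m1"
    then have "m \<subseteq> m1" unfolding J_def using ri1 by (force simp: ring_ideal_def)
    then have "m1 = m \<or> m1 = UNIV" using m ri1 unfolding max_ideal_def by blast
    then show False using ne m1 by (auto simp: max_ideal_def)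
  qed
  ultimately have "1 \<in> J" by auto
  then obtain x y where "1 = x + y" "x \<in> m" "y \<in> m1" unfolding J_def by blast
  then have "x - 1 = - y" by (simp add: algebra_simps)
  then show ?thesis using \<open>x \<in> m\<close> ri_neg[OF ri1 \<open>y \<in> m1\<close>] by metis
qed

lemma sep_elem:
  assumes m1: "max_ideal m1" and L: "\<forall>m\<in>set L. max_ideal m \<and> m \<noteq> m1"
  shows "\<exists>p. p - 1 \<in> m1 \<and> (\<forall>m\<in>set L. p \<in> m)"
  using L
proof (induction L)
  case Nil
  have "0 \<in> m1" using m1 by (simp add: max_ideal_def ring_ideal_def)
  then show ?case by (intro exI[of _ 1]) simp
next
  case (Cons m L)
  then obtain p where p: "p - 1 \<in> m1" "\<forall>m\<in>set L. p \<in> m" by auto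
  obtain q where q: "q \<in> m" "q - 1 \<in> m1" using comax[of m m1] Cons.prems m1 by auto
  have ri1: "ring_ideal m1" using m1 by (simp add: max_ideal_def)
  have eq: "p * q - 1 = p * (q - 1) + (p - 1)" by (simp add: algebra_simps)
  have "p * (q - 1) + (p - 1) \<in> m1" using ri_add[OF ri1 ri_multl[OF ri1 q(2)] p(1)] .
  then have "p * q - 1 \<in> m1" unfolding eq .
  moreover have "\<forall>m'\<in>set (m#L). p * q \<in> m'"
    using p q Cons.prems by (auto simp: max_ideal_def intro: ri_multl ri_multr)
  ultimately show ?case by blast
qed

lemma col_unit: "(s::complex mat) \<in> carrier_mat n k \<Longrightarrow> i < k \<Longrightarrow> s *\<^sub>v unit_vec k i = col s i"
  by (rule eq_vecI) (auto simp: mult_mat_vec_def)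

lemma mat_vec_subspace:
  assumes S: "cvsubspace n S" and s: "(s::complex mat) \<in> carrier_mat n k"
    and cols: "\<forall>j<k. col s j \<in> S" and u: "u \<in> carrier_vec k"
  shows "s *\<^sub>v u \<in> S"
proof -
  define P where "P i = vec k (\<lambda>j. if j < i then u $ j else 0)" for i
  have "s *\<^sub>v P i \<in> S" if "i \<le> k" for i
    using that
  proof (induction i)
    case 0
    have "P 0 = 0\<^sub>v k" by (rule eq_vecI) (auto simp: P_def)
    then show ?case using s cvsub_zero[OF S] by simp
  next
    case (Suc i)
    have eq: "P (Suc i) = P i + (u $ i) \<cdot>\<^sub>v unit_vec k i"
      by (rule eq_vecI) (auto simp: P_def unit_vec_def less_Suc_eq)
    have "s *\<^sub>v P (Suc i) = s *\<^sub>v P i + (u $ i) \<cdot>\<^sub>v (s *\<^sub>v unit_vec k i)"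
      unfolding eq using s by (simp add: mult_add_distrib_mat_vec[of _ n k] mult_mat_vec[of _ n k] P_def)
    also have "\<dots> = s *\<^sub>v P i + (u $ i) \<cdot>\<^sub>v col s i" using col_unit[OF s] Suc by simp
    finally show ?case using Suc cols cvsub_sum[OF S] cvsub_smult[OF S] by simp
  qed
  moreover have "P k = u" by (rule eq_vecI) (insert u, auto simp: P_def)
  ultimately show ?thesis by auto
qed

lemma vec_diff_smult: "(w1::complex vec) \<in> carrier_vec n \<Longrightarrow> w2 \<in> carrier_vec n \<Longrightarrow> w1 + (-1) \<cdot>\<^sub>v w2 = w1 - w2"
  by (rule eq_vecI) auto

lemma vec_diff_zero: "(w1::complex vec) \<in> carrier_vec n \<Longrightarrow> w2 \<in> carrier_vec n \<Longrightarrow> w1 - w2 = 0\<^sub>v n \<Longrightarrow> w1 = w2"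
proof -
  assume c: "w1 \<in> carrier_vec n" "w2 \<in> carrier_vec n" and z: "w1 - w2 = 0\<^sub>v n"
  show "w1 = w2"
  proof (rule eq_vecI)
    fix i assume "i < dim_vec w2"
    then have i: "i < n" using c by simp
    have "(w1 - w2) $ i = 0" using z i by simp
    then show "w1 $ i = w2 $ i" using c i by simp
  qed (use c in simp)
qed

theorem lemma3p3:
  fixes emb :: "complex \<Rightarrow> 'a::comm_ring_1"
    and d :: nat and br :: "complex vec \<Rightarrow> complex vec \<Rightarrow> complex vec"
    and ps qs :: "'a pidata"
  assumes "(1::'a) \<noteq> 0" and "calg_hom emb" and "fin_gen emb"
    and "semisimple d br"
    and "valid_pi d br ps" and "valid_pi d br qs"
    and "fst ` set ps \<inter> fst ` set qs = {}"
    and "Ext1_nonzero emb d br (Vpi emb ps) (Vpi emb qs)"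
  shows "ps = [] \<or> qs = []"
proof (rule ccontr)
  assume "\<not> (ps = [] \<or> qs = [])"
  then have pne: "ps \<noteq> []" and qne: "qs \<noteq> []" by auto
  note h = assms(2)
  have lie: "lie_algebra d br" using assms(4) by (simp add: semisimple_def)
  have brc: "\<forall>x\<in>carrier_vec d. \<forall>y\<in>carrier_vec d. br x y \<in> carrier_vec d" using lie by (simp add: lie_algebra_def)
  have vp: "distinct (map fst ps)" "\<forall>(m, V) \<in> set ps. max_ideal m \<and> g_rep d br (fst V) (snd V) \<and> g_simple d (fst V) (snd V) \<and>
        (\<exists>x\<in>carrier_vec d. snd V x \<noteq> 0\<^sub>m (fst V) (fst V))" using assms(5) by (auto simp: valid_pi_def)
  have vq: "distinct (map fst qs)" "\<forall>(m, V) \<in> set qs. max_ideal m \<and> g_rep d br (fst V) (snd V) \<and> g_simple d (fst V) (snd V) \<and>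
        (\<exists>x\<in>carrier_vec d. snd V x \<noteq> 0\<^sub>m (fst V) (fst V))" using assms(6) by (auto simp: valid_pi_def)
  have okp: "\<forall>(m,V)\<in>set ps. max_ideal m \<and> g_rep d br (fst V) (snd V)" using vp(2) by auto
  have okq: "\<forall>(m,V)\<in>set qs. max_ideal m \<and> g_rep d br (fst V) (snd V)" using vq(2) by auto
  have maxp: "\<forall>m\<in>fst ` set ps. max_ideal m" using okp by auto
  have maxq: "\<forall>m\<in>fst ` set qs. max_ideal m" using okq by auto
  define m1 where "m1 = fst (hd ps)"
  define m1' where "m1' = fst (hd qs)"
  have m1in: "m1 \<in> fst ` set ps" using pne by (simp add: m1_def)
  have m1'in: "m1' \<in> fst ` set qs" using qne by (simp add: m1'_def)
  have m1nq: "m1 \<notin> fst ` set qs" using assms(7) m1in by blast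
  have m1'np: "m1' \<notin> fst ` set ps" using assms(7) m1'in by blast
  have mx1: "max_ideal m1" and mx1': "max_ideal m1'" using maxp maxq m1in m1'in by auto
  define L where "L = filter (\<lambda>m. m \<noteq> m1) (map fst ps @ map fst qs)"
  define L' where "L' = filter (\<lambda>m. m \<noteq> m1') (map fst ps @ map fst qs)"
  have Lok: "\<forall>m\<in>set L. max_ideal m \<and> m \<noteq> m1" unfolding L_def using maxp maxq by auto
  have L'ok: "\<forall>m\<in>set L'. max_ideal m \<and> m \<noteq> m1'" unfolding L'_def using maxp maxq by auto
  obtain e0 where e0: "e0 - 1 \<in> m1" "\<forall>m\<in>set L. e0 \<in> m"
    using sep_elem[OF mx1 Lok] by blast
  obtain e0' where e0': "e0' - 1 \<in> m1'" "\<forall>m\<in>set L'. e0' \<in> m"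
    using sep_elem[OF mx1' L'ok] by blast
  define e where "e = e0 * e0"
  define e' where "e' = e0' * e0'"
  define u where "u = e0 * e0'"
  have ri: "ring_ideal m" if "m \<in> fst ` set ps \<union> fst ` set qs" for m
    using that maxp maxq by (auto simp: max_ideal_def)
  have sq1: "x * x - 1 \<in> m" if "ring_ideal m" "x - 1 \<in> m" for x m
  proof -
    have eq: "x * x - 1 = (x - 1) * x + (x - 1)" by (simp add: algebra_simps)
    show ?thesis unfolding eq using that by (intro ri_add ri_multr)
  qed
  have ri1: "ring_ideal m1" using ri m1in by auto
  have ri1': "ring_ideal m1'" using ri m1'in by auto
  have e1: "e - 1 \<in> m1" unfolding e_def using sq1[OF ri1 e0(1)] .
  have e1': "e' - 1 \<in> m1'" unfolding e'_def using sq1[OF ri1' e0'(1)] .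
  have e0in: "e0 \<in> m" if "m \<in> fst ` set ps \<union> fst ` set qs" "m \<noteq> m1" for m
    using e0(2) that unfolding L_def by auto
  have e0'in: "e0' \<in> m" if "m \<in> fst ` set ps \<union> fst ` set qs" "m \<noteq> m1'" for m
    using e0'(2) that unfolding L'_def by auto
  have ein: "e * b \<in> m" if "m \<in> fst ` set ps \<union> fst ` set qs" "m \<noteq> m1" for m b
    unfolding e_def using e0in[OF that] ri[OF that(1)] by (simp add: ri_multl ri_multr mult.assoc)
  have e'in: "e' * b \<in> m" if "m \<in> fst ` set ps \<union> fst ` set qs" "m \<noteq> m1'" for m b
    unfolding e'_def using e0'in[OF that] ri[OF that(1)] by (simp add: ri_multl ri_multr mult.assoc)
  have uin: "u * b \<in> m" if "m \<in> fst ` set ps \<union> fst ` set qs" for m b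
  proof (cases "m = m1")
    case True
    then have "m \<noteq> m1'" using m1in m1'np by auto
    have "e0' * (e0 * b) \<in> m" using ri_multr[OF ri[OF that] e0'in[OF that \<open>m \<noteq> m1'\<close>]] .
    then show ?thesis unfolding u_def by (simp add: ac_simps)
  next
    case False
    have "e0 * (e0' * b) \<in> m" using ri_multr[OF ri[OF that] e0in[OF that False]] .
    then show ?thesis unfolding u_def by (simp add: ac_simps)
  qed
  define nM where "nM = fst (Vpi emb ps)"
  define rM where "rM = snd (Vpi emb ps)"
  define nN where "nN = fst (Vpi emb qs)"
  define rN where "rN = snd (Vpi emb qs)"
  have desM: "NK (carrier_vec d) nM (\<lambda>x. rM e x) \<and> SP (carrier_vec d) nM (\<lambda>x. rM e x)"
    unfolding nM_def rM_def
    by (rule Vpi_designated[OF h lie vp(2) vp(1) m1in e1]) (use ein[of _ 1] in auto)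
  have desN: "NK (carrier_vec d) nN (\<lambda>x. rN e' x) \<and> SP (carrier_vec d) nN (\<lambda>x. rN e' x)"
    unfolding nN_def rN_def
    by (rule Vpi_designated[OF h lie vq(2) vq(1) m1'in e1']) (use e'in[of _ 1] in auto)
  have zM_e': "rM e' x = 0\<^sub>m nM nM" if "x \<in> carrier_vec d" for x
    unfolding rM_def nM_def using Vpi_zero[OF h okp _ that, of e'] e'in[of _ 1] m1'np by auto
  have zN_e: "rN (e * b) x = 0\<^sub>m nN nN" if "x \<in> carrier_vec d" for x b
    unfolding rN_def nN_def using Vpi_zero[OF h okq _ that, of "e * b"] ein m1nq by auto
  have zM_u: "rM (u * b) x = 0\<^sub>m nM nM" if "x \<in> carrier_vec d" for x b
    unfolding rM_def nM_def using Vpi_zero[OF h okp _ that, of "u * b"] uin by auto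
  have zN_u: "rN (u * b) x = 0\<^sub>m nN nN" if "x \<in> carrier_vec d" for x b
    unfolding rN_def nN_def using Vpi_zero[OF h okq _ that, of "u * b"] uin by auto
  obtain E f g where E: "ag_rep emb d br E" and fh: "ag_hom d (Vpi emb qs) E f" and gh: "ag_hom d E (Vpi emb ps) g"
    and finj: "\<forall>v\<in>carrier_vec (fst (Vpi emb qs)). f *\<^sub>v v = 0\<^sub>v (fst E) \<longrightarrow> v = 0\<^sub>v (fst (Vpi emb qs))"
    and gsurj: "\<forall>w\<in>carrier_vec (fst (Vpi emb ps)). \<exists>u\<in>carrier_vec (fst E). g *\<^sub>v u = w"
    and exact: "{f *\<^sub>v v |v. v \<in> carrier_vec (fst (Vpi emb qs))} = {u \<in> carrier_vec (fst E). g *\<^sub>v u = 0\<^sub>v (fst (Vpi emb ps))}"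
    and nsplit: "\<not> (\<exists>s. ag_hom d (Vpi emb ps) E s \<and> g * s = 1\<^sub>m (fst (Vpi emb ps)))"
    using assms(8) unfolding Ext1_nonzero_def by blast
  obtain nE \<rho> where Ep: "E = (nE, \<rho>)" by (metis surj_pair)
  have rc: "\<rho> a x \<in> carrier_mat nE nE" if "x \<in> carrier_vec d" for a x
    using E that by (simp add: ag_rep_def Ep)
  have rbr: "\<rho> (a * b) (br x y) = \<rho> a x * \<rho> b y - \<rho> b y * \<rho> a x"
    if "x \<in> carrier_vec d" "y \<in> carrier_vec d" for a b x y
    using E that by (simp add: ag_rep_def Ep)
  have fc: "f \<in> carrier_mat nE nN" and fcomm: "\<And>a x. x \<in> carrier_vec d \<Longrightarrow> f * rN a x = \<rho> a x * f"
    using fh by (auto simp: ag_hom_def Ep nN_def rN_def)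
  have gc: "g \<in> carrier_mat nM nE" and gcomm: "\<And>a x. x \<in> carrier_vec d \<Longrightarrow> g * \<rho> a x = rM a x * g"
    using gh by (auto simp: ag_hom_def Ep nM_def rM_def)
  have finj': "\<And>v. v \<in> carrier_vec nN \<Longrightarrow> f *\<^sub>v v = 0\<^sub>v nE \<Longrightarrow> v = 0\<^sub>v nN"
    using finj by (simp add: Ep nN_def)
  have gsurj': "\<And>w. w \<in> carrier_vec nM \<Longrightarrow> \<exists>u\<in>carrier_vec nE. g *\<^sub>v u = w"
    using gsurj by (simp add: Ep nM_def)
  have exact': "\<And>w. w \<in> carrier_vec nE \<Longrightarrow> g *\<^sub>v w = 0\<^sub>v nM \<Longrightarrow> \<exists>n\<in>carrier_vec nN. w = f *\<^sub>v n"
    using exact by (auto simp: Ep nM_def nN_def set_eq_iff)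
  have nsplit': "\<not> (\<exists>s. s \<in> carrier_mat nE nM \<and> (\<forall>a. \<forall>x\<in>carrier_vec d. s * rM a x = \<rho> a x * s) \<and> g * s = 1\<^sub>m nM)"
    using nsplit by (simp add: ag_hom_def Ep nM_def rM_def)
  have G1: "\<exists>n\<in>carrier_vec nN. \<rho> a x *\<^sub>v v = f *\<^sub>v n"
    if x: "x \<in> carrier_vec d" and z: "rM a x = 0\<^sub>m nM nM" and v: "v \<in> carrier_vec nE" for a x v
  proof -
    have "g *\<^sub>v (\<rho> a x *\<^sub>v v) = (g * \<rho> a x) *\<^sub>v v" using gc rc[of x a, OF x] v by simp
    also have "\<dots> = (rM a x * g) *\<^sub>v v" using gcomm[OF x] by simp
    also have "\<dots> = 0\<^sub>v nM" using z gc v by simp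
    finally show ?thesis using exact' rc[of x a, OF x] v by auto
  qed
  have G2: "\<rho> a x *\<^sub>v (f *\<^sub>v n) = 0\<^sub>v nE"
    if x: "x \<in> carrier_vec d" and z: "rN a x = 0\<^sub>m nN nN" and n: "n \<in> carrier_vec nN" for a x n
  proof -
    have "\<rho> a x *\<^sub>v (f *\<^sub>v n) = (\<rho> a x * f) *\<^sub>v n" using fc rc[of x a, OF x] n by simp
    also have "\<dots> = (f * rN a x) *\<^sub>v n" using fcomm[OF x] by simp
    also have "\<dots> = 0\<^sub>v nE" using z fc n by simp
    finally show ?thesis .
  qed
  \<comment> \<open>the complement W\<close>
  define G where "G = {\<rho> (e * b) y *\<^sub>v v |b y v. y \<in> carrier_vec d \<and> v \<in> carrier_vec nE}"
  define W where "W = \<Inter>{S. cvsubspace nE S \<and> G \<subseteq> S}"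
  have Gc: "G \<subseteq> carrier_vec nE" unfolding G_def by (auto intro!: mult_mat_vec_carrier rc)
  have carrsub: "cvsubspace nE (carrier_vec nE)" unfolding cvsubspace_def by auto
  have Wsub: "cvsubspace nE W"
  proof -
    have "W \<subseteq> carrier_vec nE" unfolding W_def using carrsub Gc by blast
    then show ?thesis unfolding cvsubspace_def W_def by auto
  qed
  have GW: "G \<subseteq> W" unfolding W_def by blast
  have Wmin: "W \<subseteq> S" if "cvsubspace nE S" "G \<subseteq> S" for S unfolding W_def using that by blast
  have Wc: "W \<subseteq> carrier_vec nE" using Wsub by (auto simp: cvsubspace_def)
  have Ginv: "\<rho> a x *\<^sub>v w \<in> W" if x: "x \<in> carrier_vec d" and w: "w \<in> G" for a x w
  proof -
    obtain b y v where w: "w = \<rho> (e * b) y *\<^sub>v v" and y: "y \<in> carrier_vec d" and v: "v \<in> carrier_vec nE"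
      using w unfolding G_def by blast
    have cx: "\<rho> a x \<in> carrier_mat nE nE" and cy: "\<rho> (e*b) y \<in> carrier_mat nE nE"
      and cxy: "\<rho> (e * (a * b)) (br x y) \<in> carrier_mat nE nE" using rc x y brc by auto
    have e1: "\<rho> a x * \<rho> (e * b) y = \<rho> (e * (a * b)) (br x y) + \<rho> (e * b) y * \<rho> a x"
    proof -
      have "\<rho> (e * (a * b)) (br x y) = \<rho> (a * (e * b)) (br x y)" by (simp add: ac_simps)
      also have "\<dots> = \<rho> a x * \<rho> (e * b) y - \<rho> (e * b) y * \<rho> a x" by (rule rbr[OF x y])
      finally show ?thesis using cx cy by (intro eq_matI) auto
    qed
    have "\<rho> a x *\<^sub>v w = (\<rho> a x * \<rho> (e * b) y) *\<^sub>v v" using w cx cy v by simp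
    also have "\<dots> = \<rho> (e * (a * b)) (br x y) *\<^sub>v v + \<rho> (e * b) y *\<^sub>v (\<rho> a x *\<^sub>v v)"
      unfolding e1 using cx cy cxy v by (simp add: add_mult_distrib_mat_vec[of _ nE nE])
    finally have eq: "\<rho> a x *\<^sub>v w = \<rho> (e * (a * b)) (br x y) *\<^sub>v v + \<rho> (e * b) y *\<^sub>v (\<rho> a x *\<^sub>v v)" .
    have "\<rho> (e * (a * b)) (br x y) *\<^sub>v v \<in> G" unfolding G_def using brc x y v by blast
    moreover have "\<rho> (e * b) y *\<^sub>v (\<rho> a x *\<^sub>v v) \<in> G" unfolding G_def using y cx v by fastforce
    ultimately show ?thesis unfolding eq using GW cvsub_sum[OF Wsub] by blast
  qed
  have Winv: "\<rho> a x *\<^sub>v w \<in> W" if x: "x \<in> carrier_vec d" and w: "w \<in> W" for a x w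
  proof -
    define S' where "S' = {w \<in> W. \<forall>a. \<forall>x\<in>carrier_vec d. \<rho> a x *\<^sub>v w \<in> W}"
    have "cvsubspace nE S'" unfolding cvsubspace_def S'_def
    proof (intro conjI ballI allI)
      show "{w \<in> W. \<forall>a. \<forall>x\<in>carrier_vec d. \<rho> a x *\<^sub>v w \<in> W} \<subseteq> carrier_vec nE" using Wc by auto
      show "0\<^sub>v nE \<in> {w \<in> W. \<forall>a. \<forall>x\<in>carrier_vec d. \<rho> a x *\<^sub>v w \<in> W}"
        using cvsub_zero[OF Wsub] mat_vec_zero[OF rc] by auto
    next
      fix w1 w2 assume w1: "w1 \<in> {w \<in> W. \<forall>a. \<forall>x\<in>carrier_vec d. \<rho> a x *\<^sub>v w \<in> W}"
        and w2: "w2 \<in> {w \<in> W. \<forall>a. \<forall>x\<in>carrier_vec d. \<rho> a x *\<^sub>v w \<in> W}"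
      then have c1: "w1 \<in> carrier_vec nE" and c2: "w2 \<in> carrier_vec nE" using Wc by auto
      show "w1 + w2 \<in> {w \<in> W. \<forall>a. \<forall>x\<in>carrier_vec d. \<rho> a x *\<^sub>v w \<in> W}"
        using w1 w2 cvsub_sum[OF Wsub] c1 c2 by (auto simp: mult_add_distrib_mat_vec[OF rc])
    next
      fix c w1 assume w1: "w1 \<in> {w \<in> W. \<forall>a. \<forall>x\<in>carrier_vec d. \<rho> a x *\<^sub>v w \<in> W}"
      then have c1: "w1 \<in> carrier_vec nE" using Wc by auto
      show "c \<cdot>\<^sub>v w1 \<in> {w \<in> W. \<forall>a. \<forall>x\<in>carrier_vec d. \<rho> a x *\<^sub>v w \<in> W}"
        using w1 cvsub_smult[OF Wsub] c1 by (auto simp: mult_mat_vec[OF rc])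
    qed
    moreover have "G \<subseteq> S'" unfolding S'_def using GW Ginv by auto
    ultimately have "W \<subseteq> S'" using Wmin by blast
    then show ?thesis using w x unfolding S'_def by blast
  qed
  have WK: "\<rho> e' x *\<^sub>v w = 0\<^sub>v nE" if x: "x \<in> carrier_vec d" and w: "w \<in> W" for x w
  proof -
    define K where "K = {w \<in> carrier_vec nE. \<forall>x\<in>carrier_vec d. \<rho> e' x *\<^sub>v w = 0\<^sub>v nE}"
    have "cvsubspace nE K" unfolding cvsubspace_def K_def
      by (auto simp: mult_add_distrib_mat_vec[OF rc] mult_mat_vec[OF rc] mat_vec_zero[OF rc])
    moreover have "G \<subseteq> K"
    proof
      fix w assume "w \<in> G"
      then obtain b y v where w: "w = \<rho> (e * b) y *\<^sub>v v" and y: "y \<in> carrier_vec d" and v: "v \<in> carrier_vec nE"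
        unfolding G_def by blast
      have "\<rho> e' x *\<^sub>v w = 0\<^sub>v nE" if x: "x \<in> carrier_vec d" for x
      proof -
        have cx: "\<rho> e' x \<in> carrier_mat nE nE" and cy: "\<rho> (e*b) y \<in> carrier_mat nE nE"
          and cxy: "\<rho> (e' * (e * b)) (br x y) \<in> carrier_mat nE nE"
          and cu: "\<rho> u x \<in> carrier_mat nE nE" and cub: "\<rho> (u * b) y \<in> carrier_mat nE nE"
          using rc x y brc by auto
        have e1: "\<rho> e' x * \<rho> (e * b) y = \<rho> (e' * (e * b)) (br x y) + \<rho> (e * b) y * \<rho> e' x"
          using rbr[OF x y, of e' "e * b"] cx cy by (intro eq_matI) auto
        have "\<rho> e' x *\<^sub>v w = (\<rho> e' x * \<rho> (e * b) y) *\<^sub>v v" using w cx cy v by simp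
        also have "\<dots> = \<rho> (e' * (e * b)) (br x y) *\<^sub>v v + \<rho> (e * b) y *\<^sub>v (\<rho> e' x *\<^sub>v v)"
          unfolding e1 using cx cy cxy v by (simp add: add_mult_distrib_mat_vec[of _ nE nE])
        also have "\<rho> (e * b) y *\<^sub>v (\<rho> e' x *\<^sub>v v) = 0\<^sub>v nE"
        proof -
          obtain n where n: "n \<in> carrier_vec nN" "\<rho> e' x *\<^sub>v v = f *\<^sub>v n" using G1[OF x zM_e'[OF x] v] by blast
          show ?thesis unfolding n(2) using G2[OF y zN_e[OF y] n(1)] .
        qed
        also have "\<rho> (e' * (e * b)) (br x y) = \<rho> u x * \<rho> (u * b) y - \<rho> (u * b) y * \<rho> u x"
        proof -
          have "e' * (e * b) = u * (u * b)" unfolding e_def e'_def u_def by (simp add: ac_simps)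
          then show ?thesis using rbr[OF x y, of u "u * b"] by simp
        qed
        also have "(\<rho> u x * \<rho> (u * b) y - \<rho> (u * b) y * \<rho> u x) *\<^sub>v v = 0\<^sub>v nE"
        proof -
          obtain n1 where n1: "n1 \<in> carrier_vec nN" "\<rho> (u * b) y *\<^sub>v v = f *\<^sub>v n1"
            using G1[OF y zM_u[OF y] v] by blast
          obtain n2 where n2: "n2 \<in> carrier_vec nN" "\<rho> u x *\<^sub>v v = f *\<^sub>v n2"
            using G1[OF x zM_u[OF x, of 1] v] by auto
          have a1: "\<rho> u x *\<^sub>v (\<rho> (u * b) y *\<^sub>v v) = 0\<^sub>v nE"
            unfolding n1(2) using G2[OF x _ n1(1), of u] zN_u[OF x, of 1] by simp
          have a2: "\<rho> (u * b) y *\<^sub>v (\<rho> u x *\<^sub>v v) = 0\<^sub>v nE"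
            unfolding n2(2) using G2[OF y zN_u[OF y] n2(1)] .
          show ?thesis using cu cub v a1 a2 by (simp add: minus_mult_distrib_mat_vec[of _ nE nE])
        qed
        finally show ?thesis using cy v by simp
      qed
      moreover have "w \<in> carrier_vec nE" using w y v by (auto intro!: mult_mat_vec_carrier rc)
      ultimately show "w \<in> K" unfolding K_def by auto
    qed
    ultimately have "W \<subseteq> K" using Wmin by blast
    then show ?thesis using w x unfolding K_def by blast
  qed
  have WN: "n = 0\<^sub>v nN" if n: "n \<in> carrier_vec nN" and fn: "f *\<^sub>v n \<in> W" for n
  proof -
    have "rN e' x *\<^sub>v n = 0\<^sub>v nN" if x: "x \<in> carrier_vec d" for x
    proof -
      have crN: "rN e' x \<in> carrier_mat nN nN"
        unfolding rN_def nN_def by (rule Vpi_carr) (use okq x in auto)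
      have "f *\<^sub>v (rN e' x *\<^sub>v n) = (f * rN e' x) *\<^sub>v n" using fc crN n by simp
      also have "\<dots> = (\<rho> e' x * f) *\<^sub>v n" using fcomm[OF x] by simp
      also have "\<dots> = \<rho> e' x *\<^sub>v (f *\<^sub>v n)" using fc rc[of x e', OF x] n by simp
      also have "\<dots> = 0\<^sub>v nE" using WK[OF x fn] .
      finally show ?thesis using finj' crN n by auto
    qed
    then show ?thesis using desN n unfolding NK_def by blast
  qed
  have Wuniq: "w1 = w2" if w1: "w1 \<in> W" and w2: "w2 \<in> W" and eq: "g *\<^sub>v w1 = g *\<^sub>v w2" for w1 w2
  proof -
    have c1: "w1 \<in> carrier_vec nE" and c2: "w2 \<in> carrier_vec nE" using w1 w2 Wc by auto
    have dW: "w1 - w2 \<in> W" using cvsub_sum[OF Wsub w1 cvsub_smult[OF Wsub w2, of "-1"]] vec_diff_smult[OF c1 c2] by simp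
    have "g *\<^sub>v (w1 - w2) = 0\<^sub>v nM" using gc c1 c2 eq by (simp add: mult_minus_distrib_mat_vec[of _ nM nE])
    then obtain n where n: "n \<in> carrier_vec nN" "w1 - w2 = f *\<^sub>v n" using exact'[of "w1 - w2"] c1 c2 by auto
    then have "n = 0\<^sub>v nN" using WN dW by auto
    then have "w1 - w2 = 0\<^sub>v nE" using n fc by simp
    then show ?thesis using vec_diff_zero[OF c1 c2] by simp
  qed
  have Wsurj: "\<exists>w\<in>W. g *\<^sub>v w = z" if z: "z \<in> carrier_vec nM" for z
  proof -
    define S where "S = {z \<in> carrier_vec nM. \<exists>w\<in>W. g *\<^sub>v w = z}"
    have "cvsubspace nM S" unfolding cvsubspace_def S_def
    proof (intro conjI ballI allI)
      show "{z \<in> carrier_vec nM. \<exists>w\<in>W. g *\<^sub>v w = z} \<subseteq> carrier_vec nM" by auto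
      show "0\<^sub>v nM \<in> {z \<in> carrier_vec nM. \<exists>w\<in>W. g *\<^sub>v w = z}"
        using cvsub_zero[OF Wsub] gc by force
    next
      fix z1 z2 :: "complex vec" assume z1: "z1 \<in> {z \<in> carrier_vec nM. \<exists>w\<in>W. g *\<^sub>v w = z}"
        and z2: "z2 \<in> {z \<in> carrier_vec nM. \<exists>w\<in>W. g *\<^sub>v w = z}"
      then obtain w1 w2 where "w1 \<in> W" "g *\<^sub>v w1 = z1" "w2 \<in> W" "g *\<^sub>v w2 = z2" by auto
      moreover have "w1 \<in> carrier_vec nE" "w2 \<in> carrier_vec nE" using calculation Wc by auto
      ultimately have "w1 + w2 \<in> W" "g *\<^sub>v (w1 + w2) = z1 + z2"
        using cvsub_sum[OF Wsub] gc by (auto simp: mult_add_distrib_mat_vec[of _ nM nE])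
      then show "z1 + z2 \<in> {z \<in> carrier_vec nM. \<exists>w\<in>W. g *\<^sub>v w = z}" using z1 z2 by auto
    next
      fix c and z1 :: "complex vec" assume z1: "z1 \<in> {z \<in> carrier_vec nM. \<exists>w\<in>W. g *\<^sub>v w = z}"
      then obtain w1 where "w1 \<in> W" "g *\<^sub>v w1 = z1" by auto
      moreover have "w1 \<in> carrier_vec nE" using calculation Wc by auto
      ultimately have "c \<cdot>\<^sub>v w1 \<in> W" "g *\<^sub>v (c \<cdot>\<^sub>v w1) = c \<cdot>\<^sub>v z1"
        using cvsub_smult[OF Wsub] gc by (auto simp: mult_mat_vec[of _ nM nE])
      then show "c \<cdot>\<^sub>v z1 \<in> {z \<in> carrier_vec nM. \<exists>w\<in>W. g *\<^sub>v w = z}" using z1 by auto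
    qed
    moreover have "\<forall>x\<in>carrier_vec d. \<forall>u'\<in>carrier_vec nM. rM e x *\<^sub>v u' \<in> S"
    proof (intro ballI)
      fix x u' :: "complex vec" assume x: "x \<in> carrier_vec d" and u': "u' \<in> carrier_vec nM"
      obtain v0 where v0: "v0 \<in> carrier_vec nE" "g *\<^sub>v v0 = u'" using gsurj'[OF u'] by blast
      have crM: "rM e x \<in> carrier_mat nM nM"
        unfolding rM_def nM_def by (rule Vpi_carr) (use okp x in auto)
      have "\<rho> (e * 1) x *\<^sub>v v0 \<in> G" unfolding G_def using x v0 by blast
      then have inW: "\<rho> e x *\<^sub>v v0 \<in> W" using GW by auto
      have "g *\<^sub>v (\<rho> e x *\<^sub>v v0) = (g * \<rho> e x) *\<^sub>v v0" using gc rc[of x e, OF x] v0 by simp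
      also have "\<dots> = (rM e x * g) *\<^sub>v v0" using gcomm[OF x] by simp
      also have "\<dots> = rM e x *\<^sub>v u'" using crM gc v0 by simp
      finally show "rM e x *\<^sub>v u' \<in> S" unfolding S_def using inW crM u' by auto
    qed
    ultimately have "S = carrier_vec nM" using desM unfolding SP_def by blast
    then show ?thesis using z S_def by auto
  qed
  define cl where "cl j = (SOME w. w \<in> W \<and> g *\<^sub>v w = unit_vec nM j)" for j
  have cl: "cl j \<in> W \<and> g *\<^sub>v cl j = unit_vec nM j" for j
    unfolding cl_def by (rule someI_ex) (use Wsurj[of "unit_vec nM j"] in auto)
  define sm where "sm = mat nE nM (\<lambda>(i,j). cl j $ i)"
  have smc: "sm \<in> carrier_mat nE nM" by (simp add: sm_def)
  have colsm: "col sm j = cl j" if "j < nM" for j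
    using that cl[of j] Wc by (intro eq_vecI) (auto simp: sm_def)
  have smW: "sm *\<^sub>v z \<in> W" if "z \<in> carrier_vec nM" for z
    by (rule mat_vec_subspace[OF Wsub smc _ that]) (use colsm cl in auto)
  have gs: "g * sm = 1\<^sub>m nM"
  proof (rule mat_eq_vecs[of _ nM nM])
    show "g * sm \<in> carrier_mat nM nM" using gc smc by simp
    show "1\<^sub>m nM \<in> carrier_mat nM nM" by simp
    show "\<forall>v\<in>carrier_vec nM. (g * sm) *\<^sub>v v = 1\<^sub>m nM *\<^sub>v v"
    proof
      fix v :: "complex vec" assume v: "v \<in> carrier_vec nM"
      have "g * sm = 1\<^sub>m nM"
      proof (rule eq_matI)
        fix i j assume i: "i < dim_row (1\<^sub>m nM)" and j: "j < dim_col (1\<^sub>m nM)"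
        have "(g * sm) $$ (i,j) = (g *\<^sub>v col sm j) $ i" using gc smc i j by (simp add: mult_mat_vec_def)
        also have "\<dots> = unit_vec nM j $ i" using colsm[of j] cl[of j] j by simp
        finally show "(g * sm) $$ (i,j) = 1\<^sub>m nM $$ (i,j)" using i j by simp
      qed (use gc smc in auto)
      then show "(g * sm) *\<^sub>v v = 1\<^sub>m nM *\<^sub>v v" by simp
    qed
  qed
  have shom: "sm * rM a x = \<rho> a x * sm" if x: "x \<in> carrier_vec d" for a x
  proof (rule mat_eq_vecs[of _ nE nM])
    have crM: "rM a x \<in> carrier_mat nM nM"
      unfolding rM_def nM_def by (rule Vpi_carr) (use okp x in auto)
    show "sm * rM a x \<in> carrier_mat nE nM" using smc crM by simp
    show "\<rho> a x * sm \<in> carrier_mat nE nM" using smc rc[of x a, OF x] by simp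
    show "\<forall>v\<in>carrier_vec nM. (sm * rM a x) *\<^sub>v v = (\<rho> a x * sm) *\<^sub>v v"
    proof
      fix v :: "complex vec" assume v: "v \<in> carrier_vec nM"
      have l: "(sm * rM a x) *\<^sub>v v = sm *\<^sub>v (rM a x *\<^sub>v v)" using smc crM v by simp
      have r: "(\<rho> a x * sm) *\<^sub>v v = \<rho> a x *\<^sub>v (sm *\<^sub>v v)" using smc rc[of x a, OF x] v by simp
      have gsz: "g *\<^sub>v (sm *\<^sub>v z) = z" if "z \<in> carrier_vec nM" for z
      proof -
        have "g *\<^sub>v (sm *\<^sub>v z) = (g * sm) *\<^sub>v z" using gc smc that by simp
        then show ?thesis using gs that by simp
      qed
      have inW1: "sm *\<^sub>v (rM a x *\<^sub>v v) \<in> W" using smW crM v by simp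
      have inW2: "\<rho> a x *\<^sub>v (sm *\<^sub>v v) \<in> W" using Winv[OF x smW[OF v]] .
      have "g *\<^sub>v (\<rho> a x *\<^sub>v (sm *\<^sub>v v)) = (g * \<rho> a x) *\<^sub>v (sm *\<^sub>v v)" using gc rc[of x a, OF x] smc v by simp
      also have "\<dots> = (rM a x * g) *\<^sub>v (sm *\<^sub>v v)" using gcomm[OF x] by simp
      also have "\<dots> = rM a x *\<^sub>v v" using crM gc smc v gsz[OF v] by simp
      finally have "g *\<^sub>v (\<rho> a x *\<^sub>v (sm *\<^sub>v v)) = g *\<^sub>v (sm *\<^sub>v (rM a x *\<^sub>v v))"
        using gsz crM v by simp
      then show "(sm * rM a x) *\<^sub>v v = (\<rho> a x * sm) *\<^sub>v v" unfolding l r using Wuniq inW1 inW2 by metis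
    qed
  qed
  show False using nsplit' smc shom gs by blast
qed


end
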